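(* Let $D$ be a positive definite diagonal $n\times n$ matrix, let $1<p\le\infty$ and let $q$ satisfy $\frac1p+\frac1q=1$. Then $$I(p,D)=\Big(\sum_{i=1}^n D_{ii}^{-q}\Big)^{-1/q}.$$ (For $p=\infty$, i.e. the spectral norm, this reads $I(sp,D)=(\sum_i D_{ii}^{-1})^{-1}$.)
   Context: $P(n)$ denotes positive semidefinite complex $n\times n$ matrices and $\circ$ the Hadamard product. $\|\cdot\|_p$ is the Schatten $p$-norm ($\|\cdot\|_\infty$ the spectral norm), and $I(p,A)=\min\{\|A\circ B\|_p: B\in P(n),\ \|B\|_p=1\}$. *)

theory Defs
  imports "Jordan_Normal_Form.Schur_Decomposition" "Jordan_Normal_Form.Spectral_Radius"
    "HOL-Library.Extended_Real"
begin

definition qform :: "complex mat \<Rightarrow> complex vec \<Rightarrow> complex" where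
  "qform A v = scalar_prod (conjugate v) (mult_mat_vec A v)"

definition psd_mats :: "nat \<Rightarrow> complex mat set" where
  "psd_mats n = {A. A \<in> carrier_mat n n \<and> mat_adjoint A = A \<and>
     (\<forall>v \<in> carrier_vec n. qform A v \<in> \<real> \<and> Re (qform A v) \<ge> 0)}"

definition pd_mat :: "nat \<Rightarrow> complex mat \<Rightarrow> bool" where
  "pd_mat n A \<longleftrightarrow> A \<in> carrier_mat n n \<and> mat_adjoint A = A \<and>
     (\<forall>v \<in> carrier_vec n. v \<noteq> 0\<^sub>v n \<longrightarrow> qform A v \<in> \<real> \<and> Re (qform A v) > 0)"

definition hadamard :: "complex mat \<Rightarrow> complex mat \<Rightarrow> complex mat" where
  "hadamard A B = mat (dim_row A) (dim_col A) (\<lambda>(i,j). A $$ (i,j) * B $$ (i,j))"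

text \<open>Squared singular values: eigenvalues of A^* A (roots of its characteristic polynomial,
  counted with algebraic multiplicity via order).\<close>
definition sq_sing_vals :: "complex mat \<Rightarrow> complex set" where
  "sq_sing_vals A = {z. poly (char_poly (mat_adjoint A * A)) z = 0}"

definition schatten_norm :: "ereal \<Rightarrow> complex mat \<Rightarrow> real" where
  "schatten_norm p A =
     (if p = \<infinity> then Max ((\<lambda>z. sqrt (cmod z)) ` sq_sing_vals A)
      else (\<Sum>z \<in> sq_sing_vals A.
              real (order z (char_poly (mat_adjoint A * A))) * sqrt (cmod z) powr real_of_ereal p)
           powr (1 / real_of_ereal p))"

text \<open>I(p,A) = min { ||A o B||_p : B in P(n), ||B||_p = 1 } (rendered as an infimum).\<close>
definition I_val :: "ereal \<Rightarrow> nat \<Rightarrow> complex mat \<Rightarrow> real" where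
  "I_val p n A = Inf {schatten_norm p (hadamard A B) | B. B \<in> psd_mats n \<and> schatten_norm p B = 1}"

end

theory Submission
  imports Defs
begin

lemma exp_convex2:
  fixes s t a :: real
  assumes "0 \<le> a" "a \<le> 1"
  shows "exp (a * s + (1 - a) * t) \<le> a * exp s + (1 - a) * exp t"
proof -
  define u where "u = exp (a * s + (1 - a) * t)"
  have "exp s = u * exp ((1 - a) * (s - t))" unfolding u_def by (simp flip: exp_add add: algebra_simps)
  also have "\<dots> \<ge> u * (1 + (1 - a) * (s - t))" unfolding u_def by (intro mult_left_mono exp_ge_add_one_self) auto
  finally have 1: "exp s \<ge> u * (1 + (1 - a) * (s - t))" .
  have "exp t = u * exp (- a * (s - t))" unfolding u_def by (simp flip: exp_add add: algebra_simps)
  also have "\<dots> \<ge> u * (1 + (- a) * (s - t))" unfolding u_def by (intro mult_left_mono exp_ge_add_one_self) auto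
  finally have 2: "exp t \<ge> u * (1 + (- a) * (s - t))" .
  have "a * exp s + (1 - a) * exp t \<ge> a * (u * (1 + (1 - a) * (s - t))) + (1 - a) * (u * (1 + (- a) * (s - t)))"
    using 1 2 assms by (intro add_mono mult_left_mono) auto
  also have "a * (u * (1 + (1 - a) * (s - t))) + (1 - a) * (u * (1 + (- a) * (s - t))) = u"
    by (simp add: algebra_simps)
  finally show ?thesis unfolding u_def .
qed

lemma young_ineq:
  fixes p q a b :: real
  assumes "p > 1" "q > 1" "1/p + 1/q = 1" "a \<ge> 0" "b \<ge> 0"
  shows "a * b \<le> a powr p / p + b powr q / q"
proof (cases "a = 0 \<or> b = 0")
  case True
  then show ?thesis using assms by auto
next
  case False
  then have ab: "a > 0" "b > 0" using assms by auto
  have h: "1 - 1/p = 1/q" using assms(3) by simp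
  then have pq: "(1 - 1/p) * q = 1" using assms(2) by simp
  have "(1/p) * (p * ln a) + (1 - 1/p) * (q * ln b) = ln a + ln b"
    using assms pq by (simp add: mult.assoc[symmetric])
  then have "a * b = exp ((1/p) * (p * ln a) + (1 - 1/p) * (q * ln b))"
    using ab by (simp add: exp_add)
  also have "\<dots> \<le> (1/p) * exp (p * ln a) + (1 - 1/p) * exp (q * ln b)"
    using assms by (intro exp_convex2) auto
  also have "\<dots> = a powr p / p + b powr q / q"
    using assms ab h by (simp add: powr_def mult.commute)
  finally show ?thesis .
qed

lemma holder_fin:
  fixes x y :: "'i \<Rightarrow> real"
  assumes I: "finite I" and x: "\<And>i. i \<in> I \<Longrightarrow> x i \<ge> 0" and y: "\<And>i. i \<in> I \<Longrightarrow> y i \<ge> 0"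
    and p: "p > 1" and q: "q > 1" and pq: "1/p + 1/q = 1"
  shows "(\<Sum>i\<in>I. x i * y i) \<le> (\<Sum>i\<in>I. x i powr p) powr (1/p) * (\<Sum>i\<in>I. y i powr q) powr (1/q)"
proof -
  define A where "A = (\<Sum>i\<in>I. x i powr p) powr (1/p)"
  define B where "B = (\<Sum>i\<in>I. y i powr q) powr (1/q)"
  have SA: "(\<Sum>i\<in>I. x i powr p) \<ge> 0" "(\<Sum>i\<in>I. y i powr q) \<ge> 0" by (auto intro: sum_nonneg)
  show ?thesis
  proof (cases "A = 0 \<or> B = 0")
    case True
    then show ?thesis
    proof
      assume "A = 0"
      then have "(\<Sum>i\<in>I. x i powr p) = 0" using SA unfolding A_def by simp
      then have "\<forall>i\<in>I. x i powr p = 0" using I by (subst (asm) sum_nonneg_eq_0_iff) auto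
      then have "\<forall>i\<in>I. x i = 0" by simp
      then show ?thesis using \<open>A = 0\<close> unfolding A_def B_def by simp
    next
      assume "B = 0"
      then have "(\<Sum>i\<in>I. y i powr q) = 0" using SA unfolding B_def by simp
      then have "\<forall>i\<in>I. y i powr q = 0" using I by (subst (asm) sum_nonneg_eq_0_iff) auto
      then have "\<forall>i\<in>I. y i = 0" by simp
      then show ?thesis using \<open>B = 0\<close> unfolding A_def B_def by simp
    qed
  next
    case False
    have Apos: "A > 0" "B > 0" using False SA unfolding A_def B_def by auto
    have Ap: "A powr p = (\<Sum>i\<in>I. x i powr p)" unfolding A_def using SA p by (simp add: powr_powr)
    have Bq: "B powr q = (\<Sum>i\<in>I. y i powr q)" unfolding B_def using SA q by (simp add: powr_powr)
    have "(\<Sum>i\<in>I. (x i / A) * (y i / B)) \<le> (\<Sum>i\<in>I. (x i / A) powr p / p + (y i / B) powr q / q)"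
      by (rule sum_mono, rule young_ineq) (use p q pq x y Apos in auto)
    also have "\<dots> = (\<Sum>i\<in>I. x i powr p) / A powr p / p + (\<Sum>i\<in>I. y i powr q) / B powr q / q"
      using x y Apos by (simp add: sum.distrib powr_divide sum_divide_distrib)
    also have "\<dots> = 1" using Apos pq by (simp flip: Ap Bq)
    finally have "(\<Sum>i\<in>I. x i * y i) / (A * B) \<le> 1"
      by (simp add: sum_divide_distrib)
    then show ?thesis using Apos unfolding A_def[symmetric] B_def[symmetric] by (simp add: divide_le_eq)
  qed
qed

lemma sum_diag_comm:
  fixes A B :: "'a::comm_ring_1 mat"
  assumes "A \<in> carrier_mat n n" "B \<in> carrier_mat n n"
  shows "(\<Sum>i<n. (A*B)$$(i,i)) = (\<Sum>i<n. (B*A)$$(i,i))"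
proof -
  have "(\<Sum>i<n. (A*B)$$(i,i)) = (\<Sum>i<n. \<Sum>k<n. A$$(i,k) * B$$(k,i))"
    using assms by (auto simp: scalar_prod_def atLeast0LessThan intro!: sum.cong)
  also have "\<dots> = (\<Sum>k<n. \<Sum>i<n. B$$(k,i) * A$$(i,k))"
    by (subst sum.swap) (simp add: mult.commute)
  also have "\<dots> = (\<Sum>i<n. (B*A)$$(i,i))"
    using assms by (auto simp: scalar_prod_def atLeast0LessThan intro!: sum.cong)
  finally show ?thesis .
qed

lemma sum_diag_similar:
  fixes A T P Q :: "'a::comm_ring_1 mat"
  assumes "similar_mat_wit A T P Q" "A \<in> carrier_mat n n"
  shows "(\<Sum>i<n. A$$(i,i)) = (\<Sum>i<n. T$$(i,i))"
proof -
  from assms have c: "T \<in> carrier_mat n n" "P \<in> carrier_mat n n" "Q \<in> carrier_mat n n"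
    and QP: "Q * P = 1\<^sub>m n" and A: "A = P * T * Q"
    unfolding similar_mat_wit_def Let_def by auto
  have "(\<Sum>i<n. A$$(i,i)) = (\<Sum>i<n. (Q * (P * T))$$(i,i))"
    unfolding A using c by (subst sum_diag_comm[of _ n]) auto
  also have "Q * (P * T) = T" using c QP by (simp add: assoc_mult_mat[symmetric, of Q n n P n T n])
  finally show ?thesis .
qed

lemma adjoint_index:
  fixes A :: "'a::conjugatable_field mat"
  assumes "i < dim_col A" "j < dim_row A"
  shows "mat_adjoint A $$ (i,j) = conjugate (A $$ (j,i))"
  using assms unfolding mat_adjoint_def by (simp add: mat_of_rows_def)

lemma adjoint_dims[simp]:
  "dim_row (mat_adjoint A) = dim_col A" "dim_col (mat_adjoint A) = dim_row A"
  unfolding mat_adjoint_def by auto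

lemma ut_mult:
  fixes T :: "'a::comm_ring_1 mat"
  assumes T: "T \<in> carrier_mat n n" and ut: "upper_triangular T"
  shows "upper_triangular (T * T)" "\<And>i. i < n \<Longrightarrow> (T*T)$$(i,i) = T$$(i,i)^2"
proof -
  show "upper_triangular (T*T)"
  proof
    fix i j assume ji: "j < i" and i: "i < dim_row (T*T)"
    have "(T*T)$$(i,j) = (\<Sum>k<n. T$$(i,k) * T$$(k,j))"
      using T i ji by (auto simp: scalar_prod_def atLeast0LessThan)
    also have "\<dots> = 0"
    proof (rule sum.neutral, intro ballI)
      fix k assume k: "k \<in> {..<n}"
      show "T$$(i,k) * T$$(k,j) = 0"
        using ut T i ji k by (cases "k < i") (auto simp: upper_triangular_def)
    qed
    finally show "(T*T)$$(i,j) = 0" .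
  qed
  fix i assume i: "i < n"
  have "(T*T)$$(i,i) = (\<Sum>k<n. T$$(i,k) * T$$(k,i))"
    using T i by (auto simp: scalar_prod_def atLeast0LessThan)
  also have "\<dots> = T$$(i,i) * T$$(i,i) + (\<Sum>k\<in>{..<n}-{i}. T$$(i,k) * T$$(k,i))"
    using i by (subst sum.remove[of _ i]) auto
  also have "(\<Sum>k\<in>{..<n}-{i}. T$$(i,k) * T$$(k,i)) = 0"
  proof (rule sum.neutral, intro ballI)
    fix k assume k: "k \<in> {..<n}-{i}"
    show "T$$(i,k) * T$$(k,i) = 0"
      using ut T i k by (cases "k < i") (auto simp: upper_triangular_def)
  qed
  finally show "(T*T)$$(i,i) = T$$(i,i)^2" by (simp add: power2_eq_square)
qed
lemma prod_list_upt_lessThan: "prod_list (map f [0..<n]) = prod f {..<n}"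
  by (subst prod.distinct_set_conv_list[symmetric]) (auto simp: atLeast0LessThan)

lemma order_prod_lin:
  fixes c :: "nat \<Rightarrow> complex"
  shows "order z (\<Prod>i<n. [:-c i, 1:]) = (\<Sum>i<n. if c i = z then 1 else 0)"
proof (induction n)
  case 0
  then show ?case by (simp add: order_0I)
next
  case (Suc n)
  have nz1: "(\<Prod>i<n. [:-c i, 1:]) \<noteq> 0" by (simp add: prod_zero_iff)
  have nz2: "[:-c n, 1:] \<noteq> 0" by simp
  have nz: "(\<Prod>i<n. [:-c i, 1:]) * [:-c n, 1:] \<noteq> 0" using nz1 nz2 mult_eq_0_iff by blast
  have o1: "order z [:-c n, 1:] = (if c n = z then 1 else 0)"
  proof (cases "c n = z")
    case True
    then show ?thesis using order_power_n_n[of z 1] by simp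
  next
    case False
    then show ?thesis by (intro order_0I[THEN trans]) auto
  qed
  show ?case by (simp only: prod.lessThan_Suc sum.lessThan_Suc order_mult[OF nz] o1 Suc.IH)
qed

lemma roots_prod_lin:
  fixes c :: "nat \<Rightarrow> complex"
  shows "{z. poly (\<Prod>i<n. [:-c i, 1:]) z = 0} = c ` {..<n}"
  by (auto simp: poly_prod prod_zero_iff)

lemma sum_ind_mult: "real (\<Sum>i<(n::nat). if P i then 1 else 0) * a = (\<Sum>i<n. if P i then a else 0)"
  by (induction n) (auto simp: algebra_simps)

lemma sum_roots_prod_lin:
  fixes c :: "nat \<Rightarrow> complex" and f :: "complex \<Rightarrow> real"
  shows "(\<Sum>z\<in>c ` {..<n}. real (order z (\<Prod>i<n. [:-c i, 1:])) * f z) = (\<Sum>i<n. f (c i))"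
proof -
  have "(\<Sum>z\<in>c ` {..<n}. real (order z (\<Prod>i<n. [:-c i, 1:])) * f z)
     = (\<Sum>z\<in>c ` {..<n}. \<Sum>i<n. if c i = z then f z else 0)"
    by (simp only: order_prod_lin sum_ind_mult)
  also have "\<dots> = (\<Sum>i<n. \<Sum>z\<in>c ` {..<n}. if c i = z then f z else 0)"
    by (rule sum.swap)
  also have "\<dots> = (\<Sum>i<n. f (c i))"
    by (rule sum.cong) (auto simp: sum.delta')
  finally show ?thesis .
qed

lemma psd_schur:
  fixes B :: "complex mat"
  assumes psd: "B \<in> psd_mats n"
  shows "\<exists>t::nat\<Rightarrow>real. (\<forall>i<n. t i \<ge> 0) \<and>
    (\<Sum>i<n. B$$(i,i)) = (\<Sum>i<n. complex_of_real (t i)) \<and>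
    (\<Sum>i<n. (B*B)$$(i,i)) = (\<Sum>i<n. complex_of_real (t i ^ 2)) \<and>
    char_poly (mat_adjoint B * B) = (\<Prod>i<n. [:-complex_of_real (t i ^ 2), 1:])"
proof -
  from psd have Bc: "B \<in> carrier_mat n n" and adjB: "mat_adjoint B = B"
    and qf: "\<And>v. v \<in> carrier_vec n \<Longrightarrow> qform B v \<in> \<real> \<and> Re (qform B v) \<ge> 0"
    unfolding psd_mats_def by auto
  obtain es where cp: "char_poly B = (\<Prod>a\<leftarrow>es. [:-a, 1:])" and len: "length es = n"
    using char_poly_factorized[OF Bc] by auto
  obtain T P Q where sd: "schur_decomposition B es = (T,P,Q)"
    by (cases "schur_decomposition B es") auto
  from schur_decomposition[OF Bc cp sd]
  have sim: "similar_mat_wit B T P Q" and ut: "upper_triangular T" and dg: "diag_mat T = es" by auto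
  from sim Bc have Tc: "T \<in> carrier_mat n n" and Pc: "P \<in> carrier_mat n n" and Qc: "Q \<in> carrier_mat n n"
    unfolding similar_mat_wit_def Let_def by auto
  have Tii: "\<And>i. i < n \<Longrightarrow> T$$(i,i) = es!i"
    using dg Tc by (auto simp: diag_mat_def)
  have real_ev: "\<exists>r. r \<ge> 0 \<and> es!i = complex_of_real r" if i: "i < n" for i
  proof -
    define e where "e = es!i"
    have "e \<in> set es" using i len unfolding e_def by auto
    then have "poly (char_poly B) e = 0" unfolding cp
      by (auto simp: poly_prod_list prod_list_zero_iff)
    then have "eigenvalue B e" using eigenvalue_root_char_poly[OF Bc] by simp
    then obtain v where ev: "eigenvector B v e" unfolding eigenvalue_def by auto
    then have v: "v \<in> carrier_vec n" "v \<noteq> 0\<^sub>v n" and Bv: "B *\<^sub>v v = e \<cdot>\<^sub>v v"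
      using Bc unfolding eigenvector_def by auto
    define r where "r = conjugate v \<bullet> v"
    have rpos: "r > 0" unfolding r_def
      using conjugate_vec_sprod_comm[OF v(1) v(1)] conjugate_square_greater_0_vec[OF v(1)] v(2) by simp
    have "qform B v = e * r" unfolding qform_def Bv r_def using v by simp
    with qf[OF v(1)] have "e * r \<in> \<real>" "Re (e * r) \<ge> 0" by auto
    moreover have "Im r = 0" "Re r > 0" using rpos by (auto simp: less_complex_def)
    ultimately have "Im e = 0" "Re e \<ge> 0"
      by (auto simp: complex_is_Real_iff zero_le_mult_iff)
    then show ?thesis unfolding e_def[symmetric] by (intro exI[of _ "Re e"]) (auto simp: complex_eq_iff)
  qed
  define t where "t i = Re (es!i)" for i
  have t: "\<And>i. i < n \<Longrightarrow> t i \<ge> 0" "\<And>i. i < n \<Longrightarrow> T$$(i,i) = complex_of_real (t i)"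
    using real_ev Tii unfolding t_def by force+
  have tr1: "(\<Sum>i<n. B$$(i,i)) = (\<Sum>i<n. complex_of_real (t i))"
    using sum_diag_similar[OF sim Bc] t by simp
  have BB: "B * B = P * (T * T) * Q"
    using similar_mat_wit_pow_id[OF sim, of 2] similar_mat_wit_pow_id[OF sim, of 2] Bc Tc
    by (simp add: numeral_2_eq_2)
  have simBB: "similar_mat_wit (B * B) (T * T) P Q"
    using sim BB Bc Tc Pc Qc unfolding similar_mat_wit_def Let_def by auto
  have "(\<Sum>i<n. (B*B)$$(i,i)) = (\<Sum>i<n. (T*T)$$(i,i))"
    by (rule sum_diag_similar[OF simBB]) (use Bc in auto)
  also have "\<dots> = (\<Sum>i<n. complex_of_real (t i ^ 2))"
    using ut_mult(2)[OF Tc ut] t by (auto intro!: sum.cong)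
  finally have tr2: "(\<Sum>i<n. (B*B)$$(i,i)) = (\<Sum>i<n. complex_of_real (t i ^ 2))" .
  have "char_poly (mat_adjoint B * B) = char_poly (T * T)"
    unfolding adjB using simBB by (intro char_poly_similar) (auto simp: similar_mat_def)
  also have "\<dots> = (\<Prod>a\<leftarrow>diag_mat (T*T). [:-a, 1:])"
    by (rule char_poly_upper_triangular[OF _ ut_mult(1)[OF Tc ut]]) (use Tc in auto)
  also have "\<dots> = (\<Prod>i<n. [:-complex_of_real (t i ^ 2), 1:])"
    unfolding diag_mat_def using Tc ut_mult(2)[OF Tc ut] t
    by (simp add: prod_list_upt_lessThan)
  finally show ?thesis using t tr1 tr2 by blast
qed

lemma schatten_prod:
  fixes A :: "complex mat" and s :: "nat \<Rightarrow> real"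
  assumes cp: "char_poly (mat_adjoint A * A) = (\<Prod>i<n. [:-complex_of_real (s i), 1:])"
    and s: "\<forall>i<n. s i \<ge> 0"
  shows "schatten_norm \<infinity> A = Max ((\<lambda>i. sqrt (s i)) ` {..<n})"
    and "p \<noteq> \<infinity> \<Longrightarrow> schatten_norm p A =
          (\<Sum>i<n. sqrt (s i) powr real_of_ereal p) powr (1/real_of_ereal p)"
proof -
  define c where "c i = complex_of_real (s i)" for i
  have sv: "sq_sing_vals A = c ` {..<n}"
    unfolding sq_sing_vals_def cp c_def[symmetric] by (rule roots_prod_lin)
  have cm: "\<And>i. i < n \<Longrightarrow> sqrt (cmod (c i)) = sqrt (s i)" using s unfolding c_def by simp
  show "schatten_norm \<infinity> A = Max ((\<lambda>i. sqrt (s i)) ` {..<n})"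
  proof -
    have "(\<lambda>i. sqrt (cmod (c i))) ` {..<n} = (\<lambda>i. sqrt (s i)) ` {..<n}"
      by (rule image_cong) (auto simp: cm)
    then show ?thesis by (simp add: schatten_norm_def sv image_image)
  qed
  assume "p \<noteq> \<infinity>"
  then show "schatten_norm p A =
          (\<Sum>i<n. sqrt (s i) powr real_of_ereal p) powr (1/real_of_ereal p)"
    unfolding schatten_norm_def sv cp c_def[symmetric] sum_roots_prod_lin using cm by simp
qed

lemma diag_adj_char_poly:
  fixes E :: "complex mat"
  assumes E: "E \<in> carrier_mat n n" and dE: "diagonal_mat E"
  shows "char_poly (mat_adjoint E * E) = (\<Prod>i<n. [:-complex_of_real (cmod (E$$(i,i)) ^ 2), 1:])"
proof -
  define M where "M = mat n n (\<lambda>(i,j). if i = j then complex_of_real (cmod (E$$(i,i)) ^ 2) else 0)"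
  have Ez: "\<And>i j. i < n \<Longrightarrow> j < n \<Longrightarrow> i \<noteq> j \<Longrightarrow> E$$(i,j) = 0"
    using dE E unfolding diagonal_mat_def by auto
  have "mat_adjoint E * E = M"
  proof (rule eq_matI)
    fix i j assume i: "i < dim_row M" and j: "j < dim_col M"
    then have i: "i < n" and j: "j < n" unfolding M_def by auto
    have "(mat_adjoint E * E) $$ (i,j) = (\<Sum>k<n. cnj (E$$(k,i)) * E$$(k,j))"
      using E i j by (auto simp: scalar_prod_def atLeast0LessThan adjoint_index intro!: sum.cong)
    also have "\<dots> = (\<Sum>k<n. if k = i then cnj (E$$(i,i)) * E$$(i,j) else 0)"
      using Ez i j by (intro sum.cong) auto
    also have "\<dots> = cnj (E$$(i,i)) * E$$(i,j)" using i by simp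
    also have "\<dots> = M $$ (i,j)"
      using i j Ez complex_norm_square[of "E$$(i,i)"] unfolding M_def
      by (cases "i = j") (auto simp: mult.commute)
    finally show "(mat_adjoint E * E) $$ (i,j) = M $$ (i,j)" .
  qed (use E in \<open>auto simp: M_def\<close>)
  moreover have "char_poly M = (\<Prod>i<n. [:-complex_of_real (cmod (E$$(i,i)) ^ 2), 1:])"
    by (subst char_poly_upper_triangular[of M n]) 
       (auto simp: M_def upper_triangular_def diag_mat_def prod_list_upt_lessThan)
  ultimately show ?thesis by simp
qed

lemma hadamard_diag:
  fixes D B :: "complex mat"
  assumes D: "D \<in> carrier_mat n n" "diagonal_mat D"
  shows "hadamard D B \<in> carrier_mat n n" "diagonal_mat (hadamard D B)"
    "\<And>i. i < n \<Longrightarrow> hadamard D B $$ (i,i) = D$$(i,i) * B$$(i,i)"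
  using D unfolding hadamard_def diagonal_mat_def by auto

lemma mult_ind_c: "(x::complex) * (if P then 1 else 0) = (if P then x else 0)"
  "cnj (if P then 1 else 0) * (y::complex) = (if P then y else 0)" by simp_all

lemma pd_diag:
  assumes "pd_mat n D" "i < n"
  shows "D$$(i,i) = complex_of_real (Re (D$$(i,i)))" "Re (D$$(i,i)) > 0"
proof -
  from assms have Dc: "D \<in> carrier_mat n n" and
    qf: "\<And>v. v \<in> carrier_vec n \<Longrightarrow> v \<noteq> 0\<^sub>v n \<Longrightarrow> qform D v \<in> \<real> \<and> Re (qform D v) > 0"
    unfolding pd_mat_def by auto
  have "qform D (unit_vec n i) = D$$(i,i)"
    using Dc assms(2) unfolding qform_def
    by (simp add: scalar_prod_def unit_vec_def mult_ind_c sum.delta sum.delta')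
  with qf[of "unit_vec n i"] assms(2) have "D$$(i,i) \<in> \<real>" "Re (D$$(i,i)) > 0" by auto
  then show "D$$(i,i) = complex_of_real (Re (D$$(i,i)))" "Re (D$$(i,i)) > 0"
    by (auto simp: complex_is_Real_iff complex_eq_iff)
qed

lemma psd_norms:
  fixes B :: "complex mat"
  assumes "B \<in> psd_mats n"
  shows "\<exists>t::nat\<Rightarrow>real. (\<forall>i<n. t i \<ge> 0) \<and>
    (\<Sum>i<n. B$$(i,i)) = (\<Sum>i<n. complex_of_real (t i)) \<and>
    (\<Sum>i<n. (B*B)$$(i,i)) = (\<Sum>i<n. complex_of_real (t i ^ 2)) \<and>
    schatten_norm \<infinity> B = Max (t ` {..<n}) \<and>
    (\<forall>p. p \<noteq> \<infinity> \<longrightarrow> schatten_norm p B = (\<Sum>i<n. t i powr real_of_ereal p) powr (1/real_of_ereal p))"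
proof -
  obtain t where t: "\<forall>i<n. t i \<ge> 0" "(\<Sum>i<n. B$$(i,i)) = (\<Sum>i<n. complex_of_real (t i))"
    "(\<Sum>i<n. (B*B)$$(i,i)) = (\<Sum>i<n. complex_of_real (t i ^ 2))"
    and cp: "char_poly (mat_adjoint B * B) = (\<Prod>i<n. [:-complex_of_real (t i ^ 2), 1:])"
    using psd_schur[OF assms] by blast
  have s: "\<forall>i<n. t i ^ 2 \<ge> 0" by simp
  have sq: "\<And>i. i < n \<Longrightarrow> sqrt (t i ^ 2) = t i" using t(1) by simp
  have "(\<lambda>i. sqrt (t i ^ 2)) ` {..<n} = t ` {..<n}" by (rule image_cong) (use t(1) in auto)
  then have "schatten_norm \<infinity> B = Max (t ` {..<n})" using schatten_prod(1)[OF cp s] by simp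
  moreover have "\<forall>p. p \<noteq> \<infinity> \<longrightarrow> schatten_norm p B = (\<Sum>i<n. t i powr real_of_ereal p) powr (1/real_of_ereal p)"
    using schatten_prod(2)[OF cp s] sq by simp
  ultimately show ?thesis using t by blast
qed

lemma had_norms:
  fixes B D :: "complex mat"
  assumes Dc: "D \<in> carrier_mat n n" and dD: "diagonal_mat D"
  shows "schatten_norm \<infinity> (hadamard D B) = Max ((\<lambda>i. cmod (D$$(i,i)) * cmod (B$$(i,i))) ` {..<n})"
    "p \<noteq> \<infinity> \<Longrightarrow> schatten_norm p (hadamard D B) =
       (\<Sum>i<n. (cmod (D$$(i,i)) * cmod (B$$(i,i))) powr real_of_ereal p) powr (1/real_of_ereal p)"
proof -
  note h = hadamard_diag[OF Dc dD, where B=B]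
  have cp: "char_poly (mat_adjoint (hadamard D B) * hadamard D B) =
      (\<Prod>i<n. [:-complex_of_real ((cmod (D$$(i,i)) * cmod (B$$(i,i))) ^ 2), 1:])"
    unfolding diag_adj_char_poly[OF h(1) h(2)] using h(3) by (simp add: norm_mult)
  have s: "\<forall>i<n. (cmod (D$$(i,i)) * cmod (B$$(i,i))) ^ 2 \<ge> 0" by simp
  have sq: "\<And>i. sqrt ((cmod (D$$(i,i)) * cmod (B$$(i,i))) ^ 2) = cmod (D$$(i,i)) * cmod (B$$(i,i))"
    by simp
  show "schatten_norm \<infinity> (hadamard D B) = Max ((\<lambda>i. cmod (D$$(i,i)) * cmod (B$$(i,i))) ` {..<n})"
    using schatten_prod(1)[OF cp s] sq by simp
  show "p \<noteq> \<infinity> \<Longrightarrow> schatten_norm p (hadamard D B) =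
       (\<Sum>i<n. (cmod (D$$(i,i)) * cmod (B$$(i,i))) powr real_of_ereal p) powr (1/real_of_ereal p)"
    using schatten_prod(2)[OF cp s] sq by simp
qed

lemma rank_one:
  fixes b :: "nat \<Rightarrow> real"
  assumes b0: "\<And>i. i < n \<Longrightarrow> b i \<ge> 0" and b1: "(\<Sum>i<n. b i) = 1"
  defines "B0 \<equiv> mat n n (\<lambda>(i,j). complex_of_real (sqrt (b i) * sqrt (b j)))"
  shows "B0 \<in> psd_mats n" "\<And>i. i < n \<Longrightarrow> B0$$(i,i) = complex_of_real (b i)"
    "schatten_norm \<infinity> B0 = 1" "p \<noteq> \<infinity> \<Longrightarrow> real_of_ereal p > 0 \<Longrightarrow> schatten_norm p B0 = 1"
proof -
  have Bc: "B0 \<in> carrier_mat n n" unfolding B0_def by simp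
  show Bii: "\<And>i. i < n \<Longrightarrow> B0$$(i,i) = complex_of_real (b i)"
    unfolding B0_def using b0 by (simp add: real_sqrt_mult[symmetric])
  have adj: "mat_adjoint B0 = B0"
    by (rule eq_matI) (auto simp: B0_def adjoint_index mult.commute)
  have qf: "qform B0 w \<in> \<real> \<and> Re (qform B0 w) \<ge> 0" if w: "w \<in> carrier_vec n" for w
  proof -
    define v where "v = vec n (\<lambda>i. complex_of_real (sqrt (b i)))"
    define a where "a = (\<Sum>j<n. complex_of_real (sqrt (b j)) * w$j)"
    have "B0 *\<^sub>v w = a \<cdot>\<^sub>v v"
    proof (rule eq_vecI)
      fix i assume "i < dim_vec (a \<cdot>\<^sub>v v)"
      then have i: "i < n" unfolding v_def by simp
      have "(B0 *\<^sub>v w) $ i = (\<Sum>j<n. complex_of_real (sqrt (b i) * sqrt (b j)) * w$j)"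
        using i w unfolding B0_def by (auto simp: scalar_prod_def atLeast0LessThan)
      also have "\<dots> = complex_of_real (sqrt (b i)) * a"
        unfolding a_def by (simp add: sum_distrib_left mult_ac)
      finally show "(B0 *\<^sub>v w) $ i = (a \<cdot>\<^sub>v v) $ i" using i unfolding v_def by (simp add: mult.commute)
    qed (use w in \<open>auto simp: v_def B0_def\<close>)
    then have "qform B0 w = a * (conjugate w \<bullet> v)"
      unfolding qform_def using w by (simp add: v_def)
    also have "conjugate w \<bullet> v = cnj a"
      using w unfolding a_def v_def by (simp add: scalar_prod_def atLeast0LessThan mult.commute)
    finally have "qform B0 w = complex_of_real (cmod a ^ 2)"
      by (simp only: complex_norm_square)
    then show ?thesis by simp
  qed
  show psd: "B0 \<in> psd_mats n" unfolding psd_mats_def using Bc adj qf by auto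
  have BB: "(B0 * B0)$$(i,i) = B0$$(i,i)" if i: "i < n" for i
  proof -
    have "(B0 * B0)$$(i,i) = (\<Sum>k<n. complex_of_real (b i * b k))"
      using i b0 unfolding B0_def
      by (auto simp: scalar_prod_def atLeast0LessThan real_sqrt_mult[symmetric] mult_ac intro!: sum.cong)
         (metis abs_of_nonneg mult_nonneg_nonneg of_real_mult real_sqrt_mult_self)
    also have "\<dots> = complex_of_real (b i * (\<Sum>k<n. b k))"
      by (simp add: sum_distrib_left)
    finally show ?thesis using Bii[OF i] b1 by simp
  qed
  obtain t where t0: "\<forall>i<n. t i \<ge> 0" and ts: "(\<Sum>i<n. B0$$(i,i)) = (\<Sum>i<n. complex_of_real (t i))"
    and ts2: "(\<Sum>i<n. (B0*B0)$$(i,i)) = (\<Sum>i<n. complex_of_real (t i ^ 2))"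
    and ninf: "schatten_norm \<infinity> B0 = Max (t ` {..<n})"
    and nfin: "\<forall>p. p \<noteq> \<infinity> \<longrightarrow> schatten_norm p B0 = (\<Sum>i<n. t i powr real_of_ereal p) powr (1/real_of_ereal p)"
    using psd_norms[OF psd] by blast
  have st: "(\<Sum>i<n. t i) = 1"
  proof -
    have "complex_of_real (\<Sum>i<n. t i) = complex_of_real (\<Sum>i<n. b i)"
      using ts Bii by simp
    then show ?thesis using b1 by (simp only: of_real_eq_iff)
  qed
  have st2: "(\<Sum>i<n. t i ^ 2) = 1"
  proof -
    have "complex_of_real (\<Sum>i<n. t i ^ 2) = complex_of_real (\<Sum>i<n. t i)"
      using ts2 ts BB by simp
    then show ?thesis using st by (simp only: of_real_eq_iff)
  qed
  have tle: "t i \<le> 1" if "i < n" for i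
    using member_le_sum[of i "{..<n}" t] t0 that st by auto
  have "(\<Sum>i<n. t i - t i ^ 2) = 0" using st st2 by (simp add: sum_subtractf)
  moreover have "\<forall>i\<in>{..<n}. t i - t i ^ 2 \<ge> 0"
    using t0 tle by (auto simp: power2_eq_square intro!: mult_left_le)
  ultimately have "\<forall>i\<in>{..<n}. t i - t i ^ 2 = 0" by (subst (asm) sum_nonneg_eq_0_iff) auto
  then have t01: "\<forall>i<n. t i = 0 \<or> t i = 1" by (auto simp: power2_eq_square)
  have "n \<noteq> 0" using st by (cases n) auto
  have ex1: "\<exists>i<n. t i = 1"
  proof (rule ccontr)
    assume "\<not> ?thesis"
    then have "\<forall>i<n. t i = 0" using t01 by auto
    then show False using st by simp
  qed
  show "schatten_norm \<infinity> B0 = 1" unfolding ninf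
    by (rule Max_eqI) (use tle ex1 in auto)
  assume "p \<noteq> \<infinity>" "real_of_ereal p > 0"
  moreover have "(\<Sum>i<n. t i powr real_of_ereal p) = (\<Sum>i<n. t i)"
    by (rule sum.cong) (use t01 \<open>real_of_ereal p > 0\<close> in auto)
  ultimately show "schatten_norm p B0 = 1" using nfin st by simp
qed

theorem corollary5p5:
  fixes n :: nat and D :: "complex mat" and p :: ereal and q :: real
  assumes "n \<ge> 1"
    and "pd_mat n D" and "diagonal_mat D"
    and "1 < p"
    and "inverse p + ereal (1 / q) = 1"
  shows "I_val p n D = (\<Sum>i<n. Re (D $$ (i,i)) powr (- q)) powr (- 1 / q)"
proof -
  have Dc: "D \<in> carrier_mat n n" using assms(2) unfolding pd_mat_def by auto
  define d where "d i = Re (D$$(i,i))" for i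
  have dpos: "\<And>i. i < n \<Longrightarrow> d i > 0" using pd_diag(2)[OF assms(2)] unfolding d_def by auto
  have cmD: "\<And>i. i < n \<Longrightarrow> cmod (D$$(i,i)) = d i"
  proof -
    fix i assume i: "i < n"
    have "cmod (D$$(i,i)) = cmod (complex_of_real (d i))" using pd_diag(1)[OF assms(2) i] unfolding d_def by simp
    then show "cmod (D$$(i,i)) = d i" using dpos[OF i] by simp
  qed
  define S where "S = (\<Sum>i<n. d i powr (-q))"
  have dq: "\<And>i. i \<in> {..<n} \<Longrightarrow> d i powr (-q) > 0" using dpos by fastforce
  have Spos: "S > 0" unfolding S_def using assms(1) by (intro sum_pos dq) (auto simp: lessThan_empty_iff)
  define c where "c = S powr (- 1 / q)"
  have goal_eq: "(\<Sum>i<n. Re (D$$(i,i)) powr (-q)) powr (- 1 / q) = c" unfolding c_def S_def d_def ..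
  define X where "X = {schatten_norm p (hadamard D B) | B. B \<in> psd_mats n \<and> schatten_norm p B = 1}"
  have I: "I_val p n D = Inf X" unfolding I_val_def X_def ..
  define b where "b i = d i powr (-q) / S" for i
  have b0: "\<And>i. i < n \<Longrightarrow> b i \<ge> 0" using Spos by (simp add: b_def)
  have b1: "(\<Sum>i<n. b i) = 1" using Spos unfolding b_def
    by (simp add: sum_divide_distrib[symmetric] S_def[symmetric])
  define B0 where "B0 = mat n n (\<lambda>(i,j). complex_of_real (sqrt (b i) * sqrt (b j)))"
  note R = rank_one[OF b0 b1, folded B0_def]
  have hB0: "\<And>i. i < n \<Longrightarrow> cmod (D$$(i,i)) * cmod (B0$$(i,i)) = d i * b i"
    using cmD R(2) b0 by simp
  note HN = had_norms[OF Dc assms(3)]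
  have nonempty: "{..<n} \<noteq> {}" using assms(1) by (auto simp: lessThan_empty_iff)
  have key: "c \<in> X \<and> (\<forall>x\<in>X. c \<le> x)"
  proof (cases p)
    case PInf
    have q1: "q = 1" using assms(5) PInf by (simp add: one_ereal_def)
    have c1: "c = 1 / S" unfolding c_def q1 using Spos by (simp add: powr_minus_divide)
    have dS: "\<And>i. i < n \<Longrightarrow> d i * b i = 1 / S" unfolding b_def q1
      by (frule dpos) (simp add: powr_minus_divide)
    have "schatten_norm p (hadamard D B0) = Max ((\<lambda>i. d i * b i) ` {..<n})"
      unfolding PInf HN(1) using hB0 by (intro arg_cong[where f=Max] image_cong) auto
    also have "(\<lambda>i. d i * b i) ` {..<n} = {1/S}" using dS nonempty by auto
    finally have "schatten_norm p (hadamard D B0) = c" using c1 by simp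
    then have cX: "c \<in> X" unfolding X_def using R(1) R(3) PInf by force
    have lb: "c \<le> x" if x: "x \<in> X" for x
    proof -
      from x obtain B where B: "B \<in> psd_mats n" "schatten_norm p B = 1"
        and xB: "x = schatten_norm p (hadamard D B)" unfolding X_def by auto
      obtain t where t0: "\<forall>i<n. t i \<ge> 0" and ts: "(\<Sum>i<n. B$$(i,i)) = (\<Sum>i<n. complex_of_real (t i))"
        and ninf: "schatten_norm \<infinity> B = Max (t ` {..<n})"
        using psd_norms[OF B(1)] by blast
      have "Max (t ` {..<n}) \<in> t ` {..<n}" using nonempty by (intro Max_in) auto
      then obtain j where j: "j < n" "t j = 1" using ninf B(2) PInf by auto
      have "1 \<le> (\<Sum>i<n. t i)" using member_le_sum[of j "{..<n}" t] j t0 by auto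
      also have "(\<Sum>i<n. t i) = cmod (\<Sum>i<n. B$$(i,i))"
        unfolding ts of_real_sum[symmetric] norm_of_real using t0 by (intro abs_of_nonneg[symmetric] sum_nonneg) auto
      also have "\<dots> \<le> (\<Sum>i<n. cmod (B$$(i,i)))" by (rule norm_sum)
      finally have sb: "1 \<le> (\<Sum>i<n. cmod (B$$(i,i)))" .
      define M where "M = Max ((\<lambda>i. d i * cmod (B$$(i,i))) ` {..<n})"
      have xM: "x = M" unfolding xB PInf HN(1) M_def using cmD
        by (intro arg_cong[where f=Max] image_cong) auto
      have "(\<Sum>i<n. cmod (B$$(i,i))) \<le> (\<Sum>i<n. M * (1 / d i))"
      proof (rule sum_mono)
        fix i assume i: "i \<in> {..<n}"
        have "d i * cmod (B$$(i,i)) \<le> M" unfolding M_def by (rule Max_ge) (use i in auto)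
        then show "cmod (B$$(i,i)) \<le> M * (1 / d i)" using dpos[of i] i
          by (simp add: field_simps mult.commute)
      qed
      also have "\<dots> = M * S" unfolding S_def q1 sum_distrib_left
        by (intro sum.cong) (auto dest: dpos simp: powr_minus_divide)
      finally have "1 \<le> M * S" using sb by simp
      then show "c \<le> x" unfolding xM c1 using Spos by (simp add: field_simps)
    qed
    show ?thesis using cX lb by auto
  next
    case (real r)
    have r1: "r > 1" using assms(4) real by (simp add: one_ereal_def)
    have rq: "1 / r + 1 / q = 1" using assms(5) real r1 by (simp add: one_ereal_def inverse_eq_divide)
    have q1: "q > 1"
    proof -
      have "1 / q = 1 - 1 / r" using rq by simp
      moreover have "0 < 1 - 1/r" "1 - 1/r < 1" using r1 by (auto simp: field_simps)
      ultimately have "0 < 1/q" "1/q < 1" by auto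
      then show ?thesis by (simp add: field_simps split: if_splits)
    qed
    have qr: "q * r = q + r" using rq r1 q1 by (simp add: field_simps)
    have pr: "real_of_ereal p = r" "p \<noteq> \<infinity>" using real by auto
    have memb: "schatten_norm p (hadamard D B0) = c"
    proof -
      have e1: "(d i * b i) powr r = d i powr (-q) / S powr r" if i: "i < n" for i
      proof -
        have "d i * b i = d i powr (1 - q) / S" unfolding b_def using dpos[OF i]
          by (simp add: powr_diff powr_minus_divide)
        then have "(d i * b i) powr r = d i powr ((1 - q) * r) / S powr r"
          using dpos[OF i] Spos by (simp add: powr_divide powr_powr)
        also have "(1 - q) * r = - q" using qr by (simp add: algebra_simps)
        finally show ?thesis .
      qed
      have "schatten_norm p (hadamard D B0) = (\<Sum>i<n. (d i * b i) powr r) powr (1 / r)"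
        unfolding HN(2)[OF pr(2)] pr(1) using hB0 by simp
      also have "(\<Sum>i<n. (d i * b i) powr r) = S / S powr r"
        using e1 unfolding S_def by (simp add: sum_divide_distrib)
      also have "\<dots> = S powr (1 - r)" using Spos by (simp add: powr_diff)
      also have "(S powr (1 - r)) powr (1 / r) = S powr ((1 - r) / r)" using Spos by (simp add: powr_powr)
      also have "(1 - r) / r = - 1 / q" using rq r1 q1 by (simp add: field_simps)
      finally show ?thesis unfolding c_def .
    qed
    moreover have "schatten_norm p B0 = 1" by (rule R(4)) (use pr r1 in auto)
    ultimately have cX: "c \<in> X" unfolding X_def using R(1) by force
    have lb: "c \<le> x" if x: "x \<in> X" for x
    proof -
      from x obtain B where B: "B \<in> psd_mats n" "schatten_norm p B = 1"
        and xB: "x = schatten_norm p (hadamard D B)" unfolding X_def by auto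
      obtain t where t0: "\<forall>i<n. t i \<ge> 0" and ts: "(\<Sum>i<n. B$$(i,i)) = (\<Sum>i<n. complex_of_real (t i))"
        and nfin: "\<forall>p. p \<noteq> \<infinity> \<longrightarrow> schatten_norm p B = (\<Sum>i<n. t i powr real_of_ereal p) powr (1/real_of_ereal p)"
        using psd_norms[OF B(1)] by blast
      have "(\<Sum>i<n. t i powr r) powr (1 / r) = 1" using nfin B(2) pr by simp
      then have "((\<Sum>i<n. t i powr r) powr (1 / r)) powr r = 1" by simp
      then have tr1: "(\<Sum>i<n. t i powr r) = 1" using r1 by (simp add: powr_powr sum_nonneg)
      have tle: "t i \<le> 1" if i: "i < n" for i
      proof (rule ccontr)
        assume "\<not> t i \<le> 1"
        then have "1 powr r < t i powr r" using r1 by (intro powr_less_mono2) auto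
        moreover have "t i powr r \<le> (\<Sum>i<n. t i powr r)"
          using member_le_sum[of i "{..<n}" "\<lambda>i. t i powr r"] i by auto
        ultimately show False using tr1 by simp
      qed
      have "1 \<le> (\<Sum>i<n. t i)"
      proof -
        have "(\<Sum>i<n. t i powr r) \<le> (\<Sum>i<n. t i)"
        proof (rule sum_mono)
          fix i assume i: "i \<in> {..<n}"
          have "t i powr r \<le> t i powr 1" using r1 t0 tle i by (intro powr_mono') auto
          then show "t i powr r \<le> t i" using t0 i by (cases "t i = 0") auto
        qed
        then show ?thesis using tr1 by simp
      qed
      also have "(\<Sum>i<n. t i) = cmod (\<Sum>i<n. B$$(i,i))"
        unfolding ts of_real_sum[symmetric] norm_of_real using t0 by (intro abs_of_nonneg[symmetric] sum_nonneg) auto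
      also have "\<dots> \<le> (\<Sum>i<n. cmod (B$$(i,i)))" by (rule norm_sum)
      finally have sb: "1 \<le> (\<Sum>i<n. cmod (B$$(i,i)))" .
      define N where "N = (\<Sum>i<n. (d i * cmod (B$$(i,i))) powr r) powr (1 / r)"
      have xN: "x = N" unfolding xB HN(2)[OF pr(2)] pr(1) N_def using cmD by simp
      have "(\<Sum>i<n. cmod (B$$(i,i))) = (\<Sum>i<n. (d i * cmod (B$$(i,i))) * (1 / d i))"
        by (intro sum.cong) (auto dest: dpos)
      also have "\<dots> \<le> N * (\<Sum>i<n. (1 / d i) powr q) powr (1 / q)"
        unfolding N_def by (rule holder_fin) (use r1 q1 rq in \<open>auto dest: dpos\<close>)
      also have "(\<Sum>i<n. (1 / d i) powr q) = S"
        unfolding S_def using dpos by (intro sum.cong) (auto simp: powr_divide powr_minus_divide)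
      finally have "1 \<le> N * S powr (1 / q)" using sb by simp
      then have "1 / S powr (1 / q) \<le> N" using Spos by (simp add: field_simps)
      then show "c \<le> x" unfolding xN c_def using Spos by (simp add: powr_minus_divide)
    qed
    show ?thesis using cX lb by auto
  next
    case MInf
    then show ?thesis using assms(4) by simp
  qed
  then show ?thesis unfolding I goal_eq by (intro cInf_eq_minimum) auto
qed

end
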